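(* For every finite multiset $\Gamma$ of ILL formulae and every ILL formula $\varphi$: $\Gamma\vdash\varphi$ (derivability in $\mathrm{N_{ILL}}$) holds if and only if $\Gamma\vdash^*\varphi$.
   Context: Fix a set $\mathbb{A}$ of propositional atoms. ILL formulae: $\phi ::= p\in\mathbb{A} \mid \top \mid 0 \mid 1 \mid \phi\multimap\phi \mid \phi\otimes\phi \mid \phi\,\&\,\phi \mid \phi\oplus\phi \mid\ !\phi$. All multisets are finite; "$\Gamma,\Delta$" is multiset union. Natural deduction $\mathrm{N_{ILL}}$: $\Gamma\vdash\varphi$ is defined inductively by: (Ax) $\varphi\vdash\varphi$; ($\multimap$I) from $\Gamma,\phi\vdash\psi$ infer $\Gamma\vdash\phi\multimap\psi$; ($\multimap$E) from $\Gamma\vdash\phi\multimap\psi$ and $\Delta\vdash\phi$ infer $\Gamma,\Delta\vdash\psi$; ($\otimes$I) from $\Gamma\vdash\phi$, $\Delta\vdash\psi$ infer $\Gamma,\Delta\vdash\phi\otimes\psi$; ($\otimes$E) from $\Gamma\vdash\phi\otimes\psi$ and $\Delta,\phi,\psi\vdash\chi$ infer $\Gamma,\Delta\vdash\chi$; ($1$I) $\vdash 1$; ($1$E) from $\Gamma\vdash 1$, $\Delta\vdash\phi$ infer $\Gamma,\Delta\vdash\phi$; ($\&$I) from $\Gamma\vdash\phi$, $\Gamma\vdash\psi$ infer $\Gamma\vdash\phi\&\psi$; ($\&$E) from $\Gamma\vdash\phi\&\psi$ infer $\Gamma\vdash\phi$ and infer $\Gamma\vdash\psi$; ($\oplus$I)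 from $\Gamma\vdash\phi$ (or $\Gamma\vdash\psi$) infer $\Gamma\vdash\phi\oplus\psi$; ($\oplus$E) from $\Gamma\vdash\phi\oplus\psi$, $\Delta,\phi\vdash\chi$, $\Delta,\psi\vdash\chi$ infer $\Gamma,\Delta\vdash\chi$; ($\top$I) for $n\ge0$, from $\Gamma_i\vdash\phi_i$ ($i=1..n$) infer $\Gamma_1,\dots,\Gamma_n\vdash\top$; ($0$E) for $n\ge 0$, from $\Gamma_i\vdash\phi_i$ ($i=1..n$) and $\Delta\vdash 0$ infer $\Gamma_1,\dots,\Gamma_n,\Delta\vdash\chi$; (Prom$_n$) for $n\ge0$, from $\Gamma_i\vdash\,!\psi_i$ ($i=1..n$) and $!\psi_1,\dots,!\psi_n\vdash\phi$ infer $\Gamma_1,\dots,\Gamma_n\vdash\,!\phi$; (Der) from $\Gamma\vdash\,!\phi$, $\Delta,\phi\vdash\psi$ infer $\Gamma,\Delta\vdash\psi$; (Wk) from $\Gamma\vdash\,!\phi$, $\Delta\vdash\psi$ infer $\Gamma,\Delta\vdash\psi$; (Ctr) from $\Gamma\vdash\,!\phi$, $\Delta,!\phi,!\phi\vdash\psi$ infer $\Gamma,\Delta\vdash\psi$. Inference schemas: a sequent is $\Psi\Rightarrow\psi$ ($\Psi$ a multiset of formulae); a box is a multiset of sequents; a schema is $\langle\mathbf{A},\mathbf{S},\varphi\rangle$ with $\mathbf{A}$ a multiset of boxes, $\mathbf{S}$ a multiset of sequents, $\varphi$ a formula. The set $\mathfrak{N}$ consists of all instances (for all formulae $\varphi,\psi,\chi,\varphi_i$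 and all $n\ge0$) of: $\langle[\{\varphi\Rightarrow\psi\}],\varnothing,\varphi\multimap\psi\rangle$; $\langle[\{\Rightarrow\varphi\multimap\psi\},\{\Rightarrow\varphi\}],\varnothing,\psi\rangle$; $\langle[\{\Rightarrow\varphi\},\{\Rightarrow\psi\}],\varnothing,\varphi\otimes\psi\rangle$; $\langle[\{\Rightarrow\varphi\otimes\psi\},\{\varphi,\psi\Rightarrow\chi\}],\varnothing,\chi\rangle$; $\langle\varnothing,\varnothing,1\rangle$; $\langle[\{\Rightarrow1\},\{\Rightarrow\chi\}],\varnothing,\chi\rangle$; $\langle[\{\Rightarrow\varphi,\ \Rightarrow\psi\}],\varnothing,\varphi\&\psi\rangle$; $\langle[\{\Rightarrow\varphi\&\psi\}],\varnothing,\varphi\rangle$; $\langle[\{\Rightarrow\varphi\&\psi\}],\varnothing,\psi\rangle$; $\langle[\{\Rightarrow\varphi\}],\varnothing,\varphi\oplus\psi\rangle$; $\langle[\{\Rightarrow\psi\}],\varnothing,\varphi\oplus\psi\rangle$; $\langle[\{\Rightarrow\varphi\oplus\psi\},\{\varphi\Rightarrow\chi,\ \psi\Rightarrow\chi\}],\varnothing,\chi\rangle$; $\langle[\{\Rightarrow\varphi_1\},\dots,\{\Rightarrow\varphi_n\}],\varnothing,\top\rangle$; $\langle[\{\Rightarrow\varphi_1\},\dots,\{\Rightarrow\varphi_n\},\{\Rightarrow0\}],\varnothing,\chi\rangle$; $\langle\varnothing,[\Rightarrow\varphi],!\varphi\rangle$; $\langle[\{\Rightarrow!\varphi\},\{\varphi\Rightarrow\psi\}],\varnothing,\psi\rangle$;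 $\langle[\{\Rightarrow!\varphi\},\{\Rightarrow\psi\}],\varnothing,\psi\rangle$; $\langle[\{\Rightarrow!\varphi\},\{!\varphi,!\varphi\Rightarrow\psi\}],\varnothing,\psi\rangle$. $\vdash^*$ is defined inductively: (Ref) $\varphi\vdash^*\varphi$; (App) if $\langle\mathbf{A},\mathbf{S},\varphi\rangle\in\mathfrak{N}$ with $\mathbf{A}=\{\mathbf{T}_1,\dots,\mathbf{T}_m\}$, and there are multisets of formulae $\Gamma_1,\dots,\Gamma_n$ ($n\ge m$) and formulae $\delta_{m+1},\dots,\delta_n$ such that $\Gamma_i,\Psi\vdash^*\psi$ for every $i\le m$ and every $\Psi\Rightarrow\psi\in\mathbf{T}_i$, $\Gamma_j\vdash^*!\delta_j$ for every $m<j\le n$, and $!\delta_{m+1},\dots,!\delta_n,\Theta\vdash^*\theta$ for every $\Theta\Rightarrow\theta\in\mathbf{S}$, then $\Gamma_1,\dots,\Gamma_n\vdash^*\varphi$. *)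

theory Defs
  imports Main "HOL-Library.Multiset"
begin

datatype 'a form =
    Atom 'a | Top | Zero | One
  | Lolli "'a form" "'a form"
  | Tensor "'a form" "'a form"
  | With "'a form" "'a form"
  | Plus "'a form" "'a form"
  | Bang "'a form"

text \<open>Natural deduction N_ILL. Rules with n premises (TopI, ZeroE, Prom_n) are
  rendered with a list of premise pairs (Gamma_i, phi_i).\<close>
inductive nd :: "'a form multiset \<Rightarrow> 'a form \<Rightarrow> bool" where
  Ax: "nd {#\<phi>#} \<phi>"
| LolliI: "nd (\<Gamma> + {#\<phi>#}) \<psi> \<Longrightarrow> nd \<Gamma> (Lolli \<phi> \<psi>)"
| LolliE: "nd \<Gamma> (Lolli \<phi> \<psi>) \<Longrightarrow> nd \<Delta> \<phi> \<Longrightarrow> nd (\<Gamma> + \<Delta>) \<psi>"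
| TensorI: "nd \<Gamma> \<phi> \<Longrightarrow> nd \<Delta> \<psi> \<Longrightarrow> nd (\<Gamma> + \<Delta>) (Tensor \<phi> \<psi>)"
| TensorE: "nd \<Gamma> (Tensor \<phi> \<psi>) \<Longrightarrow> nd (\<Delta> + {#\<phi>, \<psi>#}) \<chi> \<Longrightarrow> nd (\<Gamma> + \<Delta>) \<chi>"
| OneI: "nd {#} One"
| OneE: "nd \<Gamma> One \<Longrightarrow> nd \<Delta> \<phi> \<Longrightarrow> nd (\<Gamma> + \<Delta>) \<phi>"
| WithI: "nd \<Gamma> \<phi> \<Longrightarrow> nd \<Gamma> \<psi> \<Longrightarrow> nd \<Gamma> (With \<phi> \<psi>)"
| WithE1: "nd \<Gamma> (With \<phi> \<psi>) \<Longrightarrow> nd \<Gamma> \<phi>"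
| WithE2: "nd \<Gamma> (With \<phi> \<psi>) \<Longrightarrow> nd \<Gamma> \<psi>"
| PlusI1: "nd \<Gamma> \<phi> \<Longrightarrow> nd \<Gamma> (Plus \<phi> \<psi>)"
| PlusI2: "nd \<Gamma> \<psi> \<Longrightarrow> nd \<Gamma> (Plus \<phi> \<psi>)"
| PlusE: "nd \<Gamma> (Plus \<phi> \<psi>) \<Longrightarrow> nd (\<Delta> + {#\<phi>#}) \<chi> \<Longrightarrow> nd (\<Delta> + {#\<psi>#}) \<chi>
          \<Longrightarrow> nd (\<Gamma> + \<Delta>) \<chi>"
| TopI: "\<forall>(G, f) \<in> set ps. nd G f \<Longrightarrow> nd (sum_list (map fst ps)) Top"
| ZeroE: "\<forall>(G, f) \<in> set ps. nd G f \<Longrightarrow> nd \<Delta> Zero \<Longrightarrow> nd (sum_list (map fst ps) + \<Delta>) \<chi>"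
| Prom: "\<forall>(G, d) \<in> set ps. nd G (Bang d) \<Longrightarrow> nd (mset (map (\<lambda>(G, d). Bang d) ps)) \<phi>
          \<Longrightarrow> nd (sum_list (map fst ps)) (Bang \<phi>)"
| Der: "nd \<Gamma> (Bang \<phi>) \<Longrightarrow> nd (\<Delta> + {#\<phi>#}) \<psi> \<Longrightarrow> nd (\<Gamma> + \<Delta>) \<psi>"
| Wk: "nd \<Gamma> (Bang \<phi>) \<Longrightarrow> nd \<Delta> \<psi> \<Longrightarrow> nd (\<Gamma> + \<Delta>) \<psi>"
| Ctr: "nd \<Gamma> (Bang \<phi>) \<Longrightarrow> nd (\<Delta> + {#Bang \<phi>, Bang \<phi>#}) \<psi> \<Longrightarrow> nd (\<Gamma> + \<Delta>) \<psi>"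

type_synonym 'a sequent = "'a form multiset \<times> 'a form"
type_synonym 'a box = "'a sequent multiset"
type_synonym 'a schema = "'a box multiset \<times> 'a sequent multiset \<times> 'a form"

abbreviation sq :: "'a form list \<Rightarrow> 'a form \<Rightarrow> 'a sequent" where
  "sq Ps p \<equiv> (mset Ps, p)"

inductive_set schemasN :: "'a schema set" where
  "({# {# sq [\<phi>] \<psi> #} #}, {#}, Lolli \<phi> \<psi>) \<in> schemasN"
| "({# {# sq [] (Lolli \<phi> \<psi>) #}, {# sq [] \<phi> #} #}, {#}, \<psi>) \<in> schemasN"
| "({# {# sq [] \<phi> #}, {# sq [] \<psi> #} #}, {#}, Tensor \<phi> \<psi>) \<in> schemasN"
| "({# {# sq [] (Tensor \<phi> \<psi>) #}, {# sq [\<phi>, \<psi>] \<chi> #} #}, {#}, \<chi>) \<in> schemasN"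
| "({#}, {#}, One) \<in> schemasN"
| "({# {# sq [] One #}, {# sq [] \<chi> #} #}, {#}, \<chi>) \<in> schemasN"
| "({# {# sq [] \<phi>, sq [] \<psi> #} #}, {#}, With \<phi> \<psi>) \<in> schemasN"
| "({# {# sq [] (With \<phi> \<psi>) #} #}, {#}, \<phi>) \<in> schemasN"
| "({# {# sq [] (With \<phi> \<psi>) #} #}, {#}, \<psi>) \<in> schemasN"
| "({# {# sq [] \<phi> #} #}, {#}, Plus \<phi> \<psi>) \<in> schemasN"
| "({# {# sq [] \<psi> #} #}, {#}, Plus \<phi> \<psi>) \<in> schemasN"
| "({# {# sq [] (Plus \<phi> \<psi>) #}, {# sq [\<phi>] \<chi>, sq [\<psi>] \<chi> #} #}, {#}, \<chi>) \<in> schemasN"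
| "(mset (map (\<lambda>f. {# sq [] f #}) fs), {#}, Top) \<in> schemasN"
| "(mset (map (\<lambda>f. {# sq [] f #}) fs) + {# {# sq [] Zero #} #}, {#}, \<chi>) \<in> schemasN"
| "({#}, {# sq [] \<phi> #}, Bang \<phi>) \<in> schemasN"
| "({# {# sq [] (Bang \<phi>) #}, {# sq [\<phi>] \<psi> #} #}, {#}, \<psi>) \<in> schemasN"
| "({# {# sq [] (Bang \<phi>) #}, {# sq [] \<psi> #} #}, {#}, \<psi>) \<in> schemasN"
| "({# {# sq [] (Bang \<phi>) #}, {# sq [Bang \<phi>, Bang \<phi>] \<psi> #} #}, {#}, \<psi>) \<in> schemasN"

text \<open>The boxes T_1..T_m of A are enumerated
  by a list Ts with mset Ts = A, paired with contexts Gs (Gamma_1..Gamma_m); the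
  extra pairs (Gamma_j, delta_j) for m < j <= n are given by the list ext.\<close>
inductive star :: "'a form multiset \<Rightarrow> 'a form \<Rightarrow> bool" where
  Ref: "star {#\<phi>#} \<phi>"
| App: "(A, S, \<phi>) \<in> schemasN \<Longrightarrow> mset Ts = A \<Longrightarrow> length Gs = length Ts \<Longrightarrow>
        \<forall>(T, G) \<in> set (zip Ts Gs). \<forall>(\<Psi>, \<psi>) \<in> set_mset T. star (G + \<Psi>) \<psi> \<Longrightarrow>
        \<forall>(G, d) \<in> set ext. star G (Bang d) \<Longrightarrow>
        \<forall>(\<Theta>, \<theta>) \<in> set_mset S. star (mset (map (\<lambda>(G, d). Bang d) ext) + \<Theta>) \<theta> \<Longrightarrow>
        star (sum_list Gs + sum_list (map fst ext)) \<phi>"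

end

theory Submission
  imports Defs
begin


lemma star_app:
  assumes "(A,{#},\<phi>) \<in> schemasN" "mset Ts = A" "length Gs = length Ts"
    "\<forall>(T, G)\<in>set (zip Ts Gs). \<forall>(\<Psi>, \<psi>)\<in>#T. star (G + \<Psi>) \<psi>"
    "\<Gamma> = sum_list Gs"
  shows "star \<Gamma> \<phi>"
  using star.App[OF assms(1-4), of "[]"] assms(5) by simp

lemma nd_star: "nd \<Gamma> \<phi> \<Longrightarrow> star \<Gamma> \<phi>"
proof (induction rule: nd.induct)
  case (Ax \<phi>) then show ?case by (rule star.Ref)
next
  case (LolliI \<Gamma> \<phi> \<psi>) then show ?case
    by (intro star_app[where Ts="[{#sq [\<phi>] \<psi>#}]" and Gs="[\<Gamma>]"]) (auto intro: schemasN.intros[simplified])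
next
  case (LolliE \<Gamma> \<phi> \<psi> \<Delta>) then show ?case
    by (intro star_app[where Ts="[{#sq [] (Lolli \<phi> \<psi>)#}, {#sq [] \<phi>#}]" and Gs="[\<Gamma>,\<Delta>]"]) (auto intro: schemasN.intros[simplified])
next
  case (TensorI \<Gamma> \<phi> \<Delta> \<psi>) then show ?case
    by (intro star_app[where Ts="[{#sq [] \<phi>#}, {#sq [] \<psi>#}]" and Gs="[\<Gamma>,\<Delta>]"]) (auto intro: schemasN.intros[simplified])
next
  case (TensorE \<Gamma> \<phi> \<psi> \<Delta> \<chi>) then show ?case
    by (intro star_app[where Ts="[{#sq [] (Tensor \<phi> \<psi>)#}, {#sq [\<phi>,\<psi>] \<chi>#}]" and Gs="[\<Gamma>,\<Delta>]"]) (auto intro: schemasN.intros[simplified])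
next
  case OneI then show ?case
    by (intro star_app[where Ts="[]" and Gs="[]"]) (auto intro: schemasN.intros[simplified])
next
  case (OneE \<Gamma> \<Delta> \<phi>) then show ?case
    by (intro star_app[where Ts="[{#sq [] One#}, {#sq [] \<phi>#}]" and Gs="[\<Gamma>,\<Delta>]"]) (auto intro: schemasN.intros[simplified])
next
  case (WithI \<Gamma> \<phi> \<psi>) then show ?case
    by (intro star_app[where Ts="[{#sq [] \<phi>, sq [] \<psi>#}]" and Gs="[\<Gamma>]"]) (auto intro: schemasN.intros[simplified])
next
  case (WithE1 \<Gamma> \<phi> \<psi>) then show ?case
    by (intro star_app[where Ts="[{#sq [] (With \<phi> \<psi>)#}]" and Gs="[\<Gamma>]"]) (auto intro: schemasN.intros[simplified])
next
  case (WithE2 \<Gamma> \<phi> \<psi>) then show ?case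
    by (intro star_app[where Ts="[{#sq [] (With \<phi> \<psi>)#}]" and Gs="[\<Gamma>]"]) (auto intro: schemasN.intros[simplified])
next
  case (PlusI1 \<Gamma> \<phi> \<psi>) then show ?case
    by (intro star_app[where Ts="[{#sq [] \<phi>#}]" and Gs="[\<Gamma>]"]) (auto intro: schemasN.intros[simplified])
next
  case (PlusI2 \<Gamma> \<psi> \<phi>) then show ?case
    by (intro star_app[where Ts="[{#sq [] \<psi>#}]" and Gs="[\<Gamma>]"]) (auto intro: schemasN.intros[simplified])
next
  case (PlusE \<Gamma> \<phi> \<psi> \<Delta> \<chi>) then show ?case
    by (intro star_app[where Ts="[{#sq [] (Plus \<phi> \<psi>)#}, {#sq [\<phi>] \<chi>, sq [\<psi>] \<chi>#}]" and Gs="[\<Gamma>,\<Delta>]"]) (auto intro: schemasN.intros[simplified])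
next
  case (TopI ps) then show ?case
    apply (intro star_app[where Ts="map (\<lambda>p. {#sq [] (snd p)#}) ps" and Gs="map fst ps"])
    apply (rule schemasN.intros(13)[where fs="map snd ps", simplified])
    by (auto simp: zip_map_map zip_same_conv_map o_def)
next
  case (ZeroE ps \<Delta> \<chi>) then show ?case
    apply (intro star_app[where Ts="map (\<lambda>p. {#sq [] (snd p)#}) ps @ [{#sq [] Zero#}]" and Gs="map fst ps @ [\<Delta>]"])
    apply (rule schemasN.intros(14)[where fs="map snd ps", simplified])
    by (auto simp: zip_map_map zip_same_conv_map o_def)
next
  case (Prom ps \<phi>) then show ?case
    using star.App[where Ts="[]" and Gs="[]" and ext=ps, OF schemasN.intros(15)[of \<phi>]] by auto
next
  case (Der \<Gamma> \<phi> \<Delta> \<psi>) then show ?case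
    by (intro star_app[where Ts="[{#sq [] (Bang \<phi>)#}, {#sq [\<phi>] \<psi>#}]" and Gs="[\<Gamma>,\<Delta>]"]) (auto intro: schemasN.intros[simplified])
next
  case (Wk \<Gamma> \<phi> \<Delta> \<psi>) then show ?case
    by (intro star_app[where Ts="[{#sq [] (Bang \<phi>)#}, {#sq [] \<psi>#}]" and Gs="[\<Gamma>,\<Delta>]"]) (auto intro: schemasN.intros[simplified])
next
  case (Ctr \<Gamma> \<phi> \<Delta> \<psi>) then show ?case
    by (intro star_app[where Ts="[{#sq [] (Bang \<phi>)#}, {#sq [Bang \<phi>, Bang \<phi>] \<psi>#}]" and Gs="[\<Gamma>,\<Delta>]"]) (auto intro: schemasN.intros[simplified])
qed


lemma mset1: "mset xs = {#a#} \<Longrightarrow> xs = [a]"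
  by (cases xs) auto

lemma mset2: "mset xs = {#a, b#} \<Longrightarrow> xs = [a,b] \<or> xs = [b,a]"
proof -
  assume h: "mset xs = {#a, b#}"
  then have "length xs = 2" by (metis size_mset size_add_mset size_empty One_nat_def Suc_1)
  then obtain x y where xs: "xs = [x,y]" by (auto simp: length_Suc_conv numeral_2_eq_2)
  with h show ?thesis by (auto simp: add_eq_conv_ex)
qed

lemma nd_eq: "nd \<Gamma> \<phi> \<Longrightarrow> \<Gamma> = \<Gamma>' \<Longrightarrow> nd \<Gamma>' \<phi>" by simp

lemma weaken_ext: "nd \<Delta> \<psi> \<Longrightarrow> \<forall>(G,d)\<in>set ext. nd G (Bang d) \<Longrightarrow> nd (\<Delta> + sum_list (map fst ext)) \<psi>"
proof (induction ext)
  case Nil then show ?case by simp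
next
  case (Cons a ext)
  obtain G d where a: "a = (G,d)" by force
  from Cons a have "nd (G + (\<Delta> + sum_list (map fst ext))) \<psi>" by (intro nd.Wk[of G d "\<Delta> + sum_list (map fst ext)" \<psi>]) auto
  then show ?case using a by (simp add: add_ac)
qed

lemma len2: "length Gs = Suc (Suc 0) \<Longrightarrow> \<exists>x y. Gs = [x,y]"
  by (auto simp: length_Suc_conv)

lemma v_LolliI: "nd (add_mset \<phi> \<Gamma>) \<psi> \<Longrightarrow> nd \<Gamma> (Lolli \<phi> \<psi>)"
  using nd.LolliI[of \<Gamma> \<phi> \<psi>] by simp
lemma v_LolliE: "nd \<Gamma> (Lolli \<phi> \<psi>) \<Longrightarrow> nd \<Delta> \<phi> \<Longrightarrow> nd (\<Delta> + \<Gamma>) \<psi>"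
  using nd.LolliE[of \<Gamma> \<phi> \<psi> \<Delta>] by (simp add: add.commute)
lemma v_TensorI: "nd \<Gamma> \<phi> \<Longrightarrow> nd \<Delta> \<psi> \<Longrightarrow> nd (\<Delta> + \<Gamma>) (Tensor \<phi> \<psi>)"
  using nd.TensorI[of \<Gamma> \<phi> \<Delta> \<psi>] by (simp add: add.commute)
lemma v_TensorE1: "nd \<Gamma> (Tensor \<phi> \<psi>) \<Longrightarrow> nd (add_mset \<phi> (add_mset \<psi> \<Delta>)) \<chi> \<Longrightarrow> nd (\<Gamma> + \<Delta>) \<chi>"
  using nd.TensorE[of \<Gamma> \<phi> \<psi> \<Delta> \<chi>] by simp
lemma v_TensorE2: "nd \<Gamma> (Tensor \<phi> \<psi>) \<Longrightarrow> nd (add_mset \<phi> (add_mset \<psi> \<Delta>)) \<chi> \<Longrightarrow> nd (\<Delta> + \<Gamma>) \<chi>"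
  using nd.TensorE[of \<Gamma> \<phi> \<psi> \<Delta> \<chi>] by (simp add: add.commute)
lemma v_OneE: "nd \<Gamma> One \<Longrightarrow> nd \<Delta> \<phi> \<Longrightarrow> nd (\<Delta> + \<Gamma>) \<phi>"
  using nd.OneE[of \<Gamma> \<Delta> \<phi>] by (simp add: add.commute)
lemma v_PlusE1: "nd \<Gamma> (Plus \<phi> \<psi>) \<Longrightarrow> nd (add_mset \<phi> \<Delta>) \<chi> \<Longrightarrow> nd (add_mset \<psi> \<Delta>) \<chi> \<Longrightarrow> nd (\<Gamma> + \<Delta>) \<chi>"
  using nd.PlusE[of \<Gamma> \<phi> \<psi> \<Delta> \<chi>] by simp
lemma v_PlusE2: "nd \<Gamma> (Plus \<phi> \<psi>) \<Longrightarrow> nd (add_mset \<phi> \<Delta>) \<chi> \<Longrightarrow> nd (add_mset \<psi> \<Delta>) \<chi> \<Longrightarrow> nd (\<Delta> + \<Gamma>) \<chi>"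
  using nd.PlusE[of \<Gamma> \<phi> \<psi> \<Delta> \<chi>] by (simp add: add.commute)
lemma v_Der1: "nd \<Gamma> (Bang \<phi>) \<Longrightarrow> nd (add_mset \<phi> \<Delta>) \<psi> \<Longrightarrow> nd (\<Gamma> + \<Delta>) \<psi>"
  using nd.Der[of \<Gamma> \<phi> \<Delta> \<psi>] by simp
lemma v_Der2: "nd \<Gamma> (Bang \<phi>) \<Longrightarrow> nd (add_mset \<phi> \<Delta>) \<psi> \<Longrightarrow> nd (\<Delta> + \<Gamma>) \<psi>"
  using nd.Der[of \<Gamma> \<phi> \<Delta> \<psi>] by (simp add: add.commute)
lemma v_Wk: "nd \<Gamma> (Bang \<phi>) \<Longrightarrow> nd \<Delta> \<psi> \<Longrightarrow> nd (\<Delta> + \<Gamma>) \<psi>"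
  using nd.Wk[of \<Gamma> \<phi> \<Delta> \<psi>] by (simp add: add.commute)
lemma v_Ctr1: "nd \<Gamma> (Bang \<phi>) \<Longrightarrow> nd (add_mset (Bang \<phi>) (add_mset (Bang \<phi>) \<Delta>)) \<psi> \<Longrightarrow> nd (\<Gamma> + \<Delta>) \<psi>"
  using nd.Ctr[of \<Gamma> \<phi> \<Delta> \<psi>] by simp
lemma v_Ctr2: "nd \<Gamma> (Bang \<phi>) \<Longrightarrow> nd (add_mset (Bang \<phi>) (add_mset (Bang \<phi>) \<Delta>)) \<psi> \<Longrightarrow> nd (\<Delta> + \<Gamma>) \<psi>"
  using nd.Ctr[of \<Gamma> \<phi> \<Delta> \<psi>] by (simp add: add.commute)

lemmas vrules = v_LolliI nd.LolliE v_LolliE nd.TensorI v_TensorI v_TensorE1 v_TensorE2 nd.OneI nd.OneE v_OneE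
  nd.WithE1 nd.WithE2 nd.PlusI1 nd.PlusI2 v_PlusE1 v_PlusE2 v_Der1 v_Der2 nd.Wk v_Wk v_Ctr1 v_Ctr2

lemma boxes:
  assumes "mset Ts = mset (map (\<lambda>f. {#sq [] f#}) fs) + M" "M = {#} \<or> M = {#{#sq [] Zero#}#}"
    "length Gs = length Ts"
    "\<forall>(T, G)\<in>set (zip Ts Gs). \<forall>(\<Psi>, \<psi>)\<in>#T. nd (G + \<Psi>) \<psi>"
  obtains fs' where "Ts = map (\<lambda>f. {#sq [] f#}) fs'" "length fs' = length Gs"
    "\<forall>(G,f)\<in>set (zip Gs fs'). nd G f"
proof -
  have "\<forall>T\<in>set Ts. \<exists>f. T = {#sq [] f#}"
  proof
    fix T assume "T \<in> set Ts"
    then have "T \<in># mset Ts" by simp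
    then show "\<exists>f. T = {#sq [] f#}" using assms(1,2) by auto
  qed
  then obtain fs' where fs': "Ts = map (\<lambda>f. {#sq [] f#}) fs'" by (auto simp: ex_map_conv[symmetric])
  have "\<forall>(G,f)\<in>set (zip Gs fs'). nd G f"
  proof (clarify)
    fix G f assume "(G,f) \<in> set (zip Gs fs')"
    then obtain i where i: "i < length Gs" "i < length fs'" "G = Gs!i" "f = fs'!i" by (auto simp: set_zip)
    then have "(Ts!i, Gs!i) \<in> set (zip Ts Gs)" unfolding in_set_zip using fs' by (intro exI[of _ i]) auto
    then show "nd G f" using assms(4) i fs' by fastforce
  qed
  then show thesis using that fs' assms(3) by simp
qed

lemma core:
  assumes "(A,S,\<phi>) \<in> schemasN" "S = {#}" "mset Ts = A" "length Gs = length Ts"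
    "\<forall>(T, G)\<in>set (zip Ts Gs). \<forall>(\<Psi>, \<psi>)\<in>#T. nd (G + \<Psi>) \<psi>"
  shows "nd (sum_list Gs) \<phi>"
  using assms
proof (cases rule: schemasN.cases)
  case (13 fs)
  then obtain fs' where fs': "Ts = map (\<lambda>f. {#sq [] f#}) fs'" "length fs' = length Gs"
    "\<forall>(G,f)\<in>set (zip Gs fs'). nd G f" using boxes[of Ts fs "{#}" Gs] assms by auto
  from nd.TopI[OF fs'(3)] fs'(2) show ?thesis using 13 by simp
next
  case (14 fs)
  then obtain fs' where fs': "Ts = map (\<lambda>f. {#sq [] f#}) fs'" "length fs' = length Gs"
    "\<forall>(G,f)\<in>set (zip Gs fs'). nd G f" using boxes[of Ts fs "{#{#sq [] Zero#}#}" Gs] assms by auto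
  have "{#sq [] Zero#} \<in># A" using 14 by simp
  then have "{#sq [] Zero#} \<in># mset Ts" using assms(3) by simp
  then have "Zero \<in> set fs'" using fs'(1) by auto
  then obtain i where i: "i < length fs'" "fs'!i = Zero" by (auto simp: in_set_conv_nth)
  then have "(Gs!i, Zero) \<in> set (zip Gs fs')" using fs'(2) by (auto simp: set_zip)
  then obtain p1 p2 where p: "zip Gs fs' = p1 @ (Gs!i, Zero) # p2" by (meson split_list)
  have z: "nd (Gs!i) Zero" using fs'(3) p by auto
  have "\<forall>(G,f)\<in>set (p1 @ p2). nd G f" using fs'(3) p by auto
  from nd.ZeroE[OF this z] have "nd (sum_list (map fst (p1 @ p2)) + Gs!i) \<phi>" .
  moreover have "sum_list Gs = sum_list (map fst (zip Gs fs'))" using fs'(2) by simp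
  ultimately show ?thesis using p by (simp add: add_ac)
next
  case (15) then show ?thesis using assms(2) by simp
qed ((auto dest!: mset1 mset2 len2 simp: length_Suc_conv); (rule vrules nd.WithI nd.OneI; assumption))+


lemma app_nd:
  assumes "(A,S,\<phi>) \<in> schemasN" "mset Ts = A" "length Gs = length Ts"
    "\<forall>(T, G)\<in>set (zip Ts Gs). \<forall>(\<Psi>, \<psi>)\<in>#T. nd (G + \<Psi>) \<psi>"
    "\<forall>(G, d)\<in>set ext. nd G (Bang d)"
    "\<forall>(\<Theta>, \<theta>)\<in>#S. nd (mset (map (\<lambda>(G, d). Bang d) ext) + \<Theta>) \<theta>"
  shows "nd (sum_list Gs + sum_list (map fst ext)) \<phi>"
proof (cases "S = {#}")
  case True
  then show ?thesis using weaken_ext[OF core[OF assms(1) True assms(2-4)] assms(5)] by simp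
next
  case False
  from assms(1) False show ?thesis
  proof (cases rule: schemasN.cases)
    case (15 \<psi>)
    then have "Ts = []" "Gs = []" using assms(2,3) by auto
    moreover have "nd (mset (map (\<lambda>(G, d). Bang d) ext)) \<psi>" using assms(6) 15 by simp
    ultimately show ?thesis using nd.Prom[OF assms(5)] 15 by simp
  qed auto
qed

lemma star_nd: "star \<Gamma> \<phi> \<Longrightarrow> nd \<Gamma> \<phi>"
proof (induction rule: star.induct)
  case (Ref \<phi>) then show ?case by (rule nd.Ax)
next
  case (App A S \<phi> Ts Gs ext)
  show ?case
  proof (rule app_nd[OF App(1-3)])
    show "\<forall>(T, G)\<in>set (zip Ts Gs). \<forall>(\<Psi>, \<psi>)\<in>#T. nd (G + \<Psi>) \<psi>" using App(4) by fastforce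
    show "\<forall>(G, d)\<in>set ext. nd G (Bang d)" using App(5) by fastforce
    show "\<forall>(\<Theta>, \<theta>)\<in>#S. nd (mset (map (\<lambda>(G, d). Bang d) ext) + \<Theta>) \<theta>" using App(6) by fastforce
  qed
qed


theorem theorem3:
  fixes \<Gamma> :: "'a form multiset" and \<phi> :: "'a form"
  shows "nd \<Gamma> \<phi> \<longleftrightarrow> star \<Gamma> \<phi>"
  using nd_star star_nd by blast

end
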